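(* Let $A$ be an Archimedean semiprime $f$-algebra which is Dedekind complete. Then every intermediate algebra in $A$ (i.e., every subalgebra of $A$ containing $A_b$) is an order ideal of $A$. In particular, every intermediate algebra in $A$ is a Dedekind complete semiprime $f$-algebra.
   Context: An $f$-algebra is a real associative algebra that is a vector lattice with $A_+A_+\subseteq A_+$ and such that $a\wedge b=0$ implies $ac\wedge b=ca\wedge b=0$ for all $c\in A_+$; it is semiprime if $0$ is its only nilpotent element. $A_b=\{a\in A: a^2\le\mu|a|\text{ for some }\mu\in(0,\infty)\}$ is the set of bounded elements. An order ideal is a solid vector subspace. *)

theory Defs
  imports Complex_Main
begin

text \<open>Ambient structure: a type of class real_algebra (real associative algebra,
not necessarily unital) whose order makes it an ordered real vector space and a
lattice, i.e. a real vector lattice (Riesz space).  All notions below are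
relativised to a carrier set S (S = UNIV for A itself).\<close>

definition vabs :: "'a::{lattice, ab_group_add} \<Rightarrow> 'a" where
  "vabs a = sup a (- a)"

definition subalgebra :: "'a::real_algebra set \<Rightarrow> bool" where
  "subalgebra S \<longleftrightarrow> 0 \<in> S \<and> (\<forall>x\<in>S. \<forall>y\<in>S. x + y \<in> S)
     \<and> (\<forall>c::real. \<forall>x\<in>S. c *\<^sub>R x \<in> S) \<and> (\<forall>x\<in>S. \<forall>y\<in>S. x * y \<in> S)"

definition f_algebra_on :: "'a::{real_algebra, ordered_real_vector, lattice} set \<Rightarrow> bool" where
  "f_algebra_on S \<longleftrightarrow> subalgebra S
     \<and> (\<forall>a\<in>S. \<forall>b\<in>S. inf a b \<in> S \<and> sup a b \<in> S)
     \<and> (\<forall>a\<in>S. \<forall>b\<in>S. 0 \<le> a \<longrightarrow> 0 \<le> b \<longrightarrow> 0 \<le> a * b)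
     \<and> (\<forall>a\<in>S. \<forall>b\<in>S. \<forall>c\<in>S. inf a b = 0 \<and> 0 \<le> c \<longrightarrow>
            inf (a * c) b = 0 \<and> inf (c * a) b = 0)"

definition archimedean_on :: "'a::{real_vector, order} set \<Rightarrow> bool" where
  "archimedean_on S \<longleftrightarrow> (\<forall>x\<in>S. \<forall>y\<in>S. 0 \<le> x \<and> (\<forall>n::nat. real n *\<^sub>R x \<le> y) \<longrightarrow> x = 0)"

definition dedekind_complete_on :: "'a::order set \<Rightarrow> bool" where
  "dedekind_complete_on S \<longleftrightarrow> (\<forall>X\<subseteq>S. X \<noteq> {} \<and> (\<exists>u\<in>S. \<forall>x\<in>X. x \<le> u) \<longrightarrow>
     (\<exists>s\<in>S. (\<forall>x\<in>X. x \<le> s) \<and> (\<forall>u\<in>S. (\<forall>x\<in>X. x \<le> u) \<longrightarrow> s \<le> u)))"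

text \<open>a is nilpotent iff a^(n+1) = 0 for some n (powers without a unit).\<close>
definition nilpotent :: "'a::ring \<Rightarrow> bool" where
  "nilpotent a \<longleftrightarrow> (\<exists>n. (((*) a) ^^ n) a = 0)"

definition semiprime_on :: "'a::ring set \<Rightarrow> bool" where
  "semiprime_on S \<longleftrightarrow> (\<forall>a\<in>S. nilpotent a \<longrightarrow> a = 0)"

definition bounded_elements :: "'a::{real_algebra, ordered_real_vector, lattice} set" where
  "bounded_elements = {a. \<exists>\<mu>::real. 0 < \<mu> \<and> a * a \<le> \<mu> *\<^sub>R vabs a}"

definition order_ideal :: "'a::{real_algebra, ordered_real_vector, lattice} set \<Rightarrow> bool" where
  "order_ideal S \<longleftrightarrow> 0 \<in> S \<and> (\<forall>x\<in>S. \<forall>y\<in>S. x + y \<in> S) \<and> (\<forall>c::real. \<forall>x\<in>S. c *\<^sub>R x \<in> S)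
     \<and> (\<forall>x\<in>S. \<forall>y. vabs y \<le> vabs x \<longrightarrow> y \<in> S)"

definition intermediate_algebra :: "'a::{real_algebra, ordered_real_vector, lattice} set \<Rightarrow> bool" where
  "intermediate_algebra B \<longleftrightarrow> subalgebra B \<and> bounded_elements \<subseteq> B"

end

theory Submission
  imports Defs "HOL-Library.Lattice_Algebras"
begin
interpretation LG: lattice_ab_group_add "(+)" "0::'a::{ordered_ab_group_add,lattice}" "(-)" uminus "(\<le>)" "(<)" inf sup
  by unfold_locales

definition pp :: "'a::{ordered_ab_group_add,lattice} \<Rightarrow> 'a" where "pp x = sup x 0"
definition np :: "'a::{ordered_ab_group_add,lattice} \<Rightarrow> 'a" where "np x = sup (- x) 0"

lemma pp_nonneg: "0 \<le> pp (x::'a::{ordered_ab_group_add,lattice})" by (simp add: pp_def)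
lemma np_nonneg: "0 \<le> np (x::'a::{ordered_ab_group_add,lattice})" by (simp add: np_def)
lemma pp_ge: "x \<le> pp (x::'a::{ordered_ab_group_add,lattice})" by (simp add: pp_def)
lemma np_ge: "- x \<le> np (x::'a::{ordered_ab_group_add,lattice})" by (simp add: np_def)

lemma pp_np: "x = pp x - np (x::'a::{ordered_ab_group_add,lattice})"
proof -
  have "np x = - inf x 0" by (simp add: np_def LG.neg_inf_eq_sup)
  then have "pp x - np x = sup x 0 + inf x 0" by (simp add: pp_def)
  also have "\<dots> = x + 0" by (metis LG.add_eq_inf_sup)
  finally show ?thesis by simp
qed

lemma np_eq: "np x = pp x - (x::'a::{ordered_ab_group_add,lattice})"
  using pp_np[of x] by (simp add: algebra_simps)

lemma pp_np_disj: "inf (pp x) (np x) = (0::'a::{ordered_ab_group_add,lattice})"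
proof -
  have "inf (pp x) (np x) = inf (pp x + 0) (pp x + (- x))" by (simp add: np_eq)
  also have "\<dots> = pp x + inf 0 (- x)" by (simp add: LG.add_inf_distrib_left)
  also have "inf 0 (-x) = - sup 0 x" by (simp add: LG.neg_sup_eq_inf)
  also have "pp x + - sup 0 x = 0" by (simp only: pp_def sup_commute[of x 0] right_minus)
  finally show ?thesis .
qed

lemma pp_of_nonneg: "0 \<le> x \<Longrightarrow> pp x = (x::'a::{ordered_ab_group_add,lattice})"
  by (simp add: pp_def sup_absorb1)
lemma np_of_nonneg: "0 \<le> x \<Longrightarrow> np x = (0::'a::{ordered_ab_group_add,lattice})"
  by (simp add: np_def sup_absorb2)
lemma pp_of_nonpos: "x \<le> 0 \<Longrightarrow> pp x = (0::'a::{ordered_ab_group_add,lattice})"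
  by (simp add: pp_def sup_absorb2)
lemma pp_zero_iff: "pp x = 0 \<longleftrightarrow> x \<le> (0::'a::{ordered_ab_group_add,lattice})"
  by (simp add: pp_def sup_absorb2 le_iff_sup)
lemma np_zero_iff: "np x = 0 \<longleftrightarrow> 0 \<le> (x::'a::{ordered_ab_group_add,lattice})"
  by (metis np_def neg_le_0_iff_le le_iff_sup sup_commute)

lemma pp_le: "x \<le> y \<Longrightarrow> 0 \<le> y \<Longrightarrow> pp x \<le> (y::'a::{ordered_ab_group_add,lattice})"
  by (simp add: pp_def)

lemma pp_mono: "x \<le> y \<Longrightarrow> pp x \<le> pp (y::'a::{ordered_ab_group_add,lattice})"
  unfolding pp_def by (meson le_sup_iff order_trans sup_ge1 sup_ge2)

lemma np_is_pp_neg: "np x = pp (- (x::'a::{ordered_ab_group_add,lattice}))"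
  by (simp add: np_def pp_def)

lemma decomp_unique:
  fixes p n :: "'a::{ordered_ab_group_add,lattice}"
  assumes "0 \<le> p" "0 \<le> n" "inf p n = 0"
  shows "pp (p - n) = p" "np (p - n) = n"
proof -
  have "sup p n + inf p n = p + n" by (metis LG.add_eq_inf_sup)
  then have s: "sup p n = p + n" using assms by simp
  have "pp (p - n) = sup (p - n) (n - n)" by (simp add: pp_def)
  also have "\<dots> = sup p n - n" by (metis LG.add_sup_distrib_right diff_conv_add_uminus)
  also have "\<dots> = p" using s by simp
  finally show 1: "pp (p - n) = p" .
  show "np (p - n) = n" using 1 by (simp add: np_eq)
qed

lemma vabs_pp_np: "vabs x = pp x + np (x::'a::{ordered_ab_group_add,lattice})"
proof -
  have "pp x + np x = sup (x + np x) (0 + np x)" by (simp add: pp_def LG.add_sup_distrib_right)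
  also have "x + np x = sup 0 x" by (simp add: np_def LG.add_sup_distrib_left)
  also have "sup (sup 0 x) (0 + np x) = sup (sup x (-x)) 0" by (simp add: np_def sup_assoc sup_commute sup_left_commute)
  also have "\<dots> = sup x (-x)"
  proof -
    have "0 \<le> sup x (-x) + sup x (-x)"
    proof -
      have "x + - x \<le> sup x (-x) + sup x (-x)" by (intro add_mono) auto
      then show ?thesis by simp
    qed
    then have "0 \<le> sup x (-x)" by simp
    then show ?thesis by (simp add: sup_absorb1)
  qed
  finally show ?thesis by (simp add: vabs_def)
qed

lemma vabs_nonneg: "0 \<le> vabs (x::'a::{ordered_ab_group_add,lattice})"
  by (metis vabs_pp_np add_nonneg_nonneg pp_nonneg np_nonneg)
lemma vabs_ge: "x \<le> vabs (x::'a::{ordered_ab_group_add,lattice})" by (simp add: vabs_def)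
lemma vabs_ge_neg: "- x \<le> vabs (x::'a::{ordered_ab_group_add,lattice})" by (simp add: vabs_def)
lemma vabs_of_nonneg: "0 \<le> x \<Longrightarrow> vabs x = (x::'a::{ordered_ab_group_add,lattice})"
  by (simp add: vabs_pp_np pp_of_nonneg np_of_nonneg)
lemma vabs_vabs: "vabs (vabs x) = vabs (x::'a::{ordered_ab_group_add,lattice})"
  by (simp add: vabs_of_nonneg vabs_nonneg)
lemma vabs_neg: "vabs (- x) = vabs (x::'a::{ordered_ab_group_add,lattice})"
  by (simp add: vabs_def sup_commute)
lemma vabs_le: "x \<le> y \<Longrightarrow> - x \<le> y \<Longrightarrow> vabs x \<le> (y::'a::{ordered_ab_group_add,lattice})"
  by (simp add: vabs_def)
lemma vabs_zero_iff: "vabs x = 0 \<longleftrightarrow> x = (0::'a::{ordered_ab_group_add,lattice})"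
  by (metis vabs_def LG.sup_0_imp_0 sup.idem neg_0_equal_iff_equal)
lemma vabs_triangle: "vabs (x + y) \<le> vabs x + vabs (y::'a::{ordered_ab_group_add,lattice})"
  apply (rule vabs_le)
   apply (intro add_mono vabs_ge)
  apply (simp only: minus_add_distrib)
  by (metis add.commute add_mono vabs_ge_neg)
lemma pp_le_vabs: "pp x \<le> vabs (x::'a::{ordered_ab_group_add,lattice})"
  by (simp add: vabs_pp_np np_nonneg)
lemma np_le_vabs: "np x \<le> vabs (x::'a::{ordered_ab_group_add,lattice})"
  by (simp add: vabs_pp_np pp_nonneg)

lemma vabs_between: "a \<le> s \<Longrightarrow> s \<le> b \<Longrightarrow> vabs s \<le> vabs a + vabs (b::'a::{ordered_ab_group_add,lattice})"
proof (rule vabs_le)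
  assume "a \<le> s" "s \<le> b"
  show "s \<le> vabs a + vabs b" using \<open>s \<le> b\<close> vabs_ge[of b] vabs_nonneg[of a]
    by (metis add.commute add_increasing2 order_trans)
  show "- s \<le> vabs a + vabs b" using \<open>a \<le> s\<close> vabs_ge_neg[of a] vabs_nonneg[of b]
    by (metis add_increasing2 neg_le_iff_le order_trans)
qed

lemma vabs_inf: "vabs (inf a b) \<le> vabs a + vabs (b::'a::{ordered_ab_group_add,lattice})"
  apply (rule vabs_le)
   apply (metis add_increasing2 inf_le1 vabs_ge vabs_nonneg order_trans)
  apply (simp add: LG.neg_inf_eq_sup)
  by (metis add.commute add_increasing2 vabs_ge_neg vabs_nonneg)

lemma vabs_sup: "vabs (sup a b) \<le> vabs a + vabs (b::'a::{ordered_ab_group_add,lattice})"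
  apply (rule vabs_le)
   apply simp
   apply (metis add.commute add_increasing2 vabs_ge vabs_nonneg)
  apply (simp add: LG.neg_sup_eq_inf)
  by (metis add_increasing2 inf_le1 vabs_ge_neg vabs_nonneg order_trans)

lemma inf_add_le:
  fixes u v w :: "'a::{ordered_ab_group_add,lattice}"
  assumes "0 \<le> u" "0 \<le> v" "0 \<le> w"
  shows "inf u (v + w) \<le> inf u v + inf u w"
proof -
  have 1: "inf u (v + w) \<le> inf u v + w"
  proof -
    have "inf u (v + w) \<le> inf (u + w) (v + w)" using assms
      by (metis add_increasing2 inf_mono order_refl)
    also have "\<dots> = inf u v + w" by (simp add: LG.add_inf_distrib_right)
    finally show ?thesis .
  qed
  have 2: "inf u (v + w) \<le> inf u v + u"
  proof -
    have "u \<le> u + u" "u \<le> v + u" using assms by simp_all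
    then have "inf u (v + w) \<le> inf (u + u) (v + u)"
      by (meson inf.cobounded1 le_inf_iff order.trans)
    also have "\<dots> = inf u v + u" by (simp add: LG.add_inf_distrib_right)
    finally show ?thesis .
  qed
  have "inf u v + inf u w = inf (inf u v + u) (inf u v + w)"
    by (simp add: LG.add_inf_distrib_left inf_commute)
  with 1 2 show ?thesis by simp
qed

lemma disj_add:
  fixes u v w :: "'a::{ordered_ab_group_add,lattice}"
  assumes "0 \<le> u" "0 \<le> v" "0 \<le> w" "inf u v = 0" "inf u w = 0"
  shows "inf u (v + w) = 0"
  using inf_add_le[OF assms(1-3)] assms by (simp add: antisym)

lemma disj_add_left:
  fixes u v w :: "'a::{ordered_ab_group_add,lattice}"
  assumes "0 \<le> u" "0 \<le> v" "0 \<le> w" "inf u w = 0" "inf v w = 0"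
  shows "inf (u + v) w = 0"
  using disj_add[OF assms(3,1,2)] assms by (simp add: inf_commute)

lemma disj_mono:
  fixes u v u' v' :: "'a::{ordered_ab_group_add,lattice}"
  assumes "inf u v = 0" "0 \<le> u'" "u' \<le> u" "0 \<le> v'" "v' \<le> v"
  shows "inf u' v' = 0"
  using assms by (metis antisym inf_mono le_inf_iff)

lemma inf_sub_inf: "inf (a - inf a b) (b - inf a b) = (0::'a::{ordered_ab_group_add,lattice})"
  by (metis LG.add_inf_distrib_right diff_conv_add_uminus right_minus)

lemma scaleR_inf:
  fixes u v :: "'a::{ordered_real_vector,lattice}"
  assumes "0 < c"
  shows "c *\<^sub>R inf u v = inf (c *\<^sub>R u) (c *\<^sub>R v)"
proof (rule antisym)
  show "c *\<^sub>R inf u v \<le> inf (c *\<^sub>R u) (c *\<^sub>R v)" using assms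
    by (simp add: scaleR_left_mono)
  have "inverse c *\<^sub>R inf (c *\<^sub>R u) (c *\<^sub>R v) \<le> inf u v"
  proof -
    have "inverse c *\<^sub>R inf (c *\<^sub>R u) (c *\<^sub>R v) \<le> inverse c *\<^sub>R (c *\<^sub>R u)"
      using assms by (intro scaleR_left_mono) auto
    moreover have "inverse c *\<^sub>R inf (c *\<^sub>R u) (c *\<^sub>R v) \<le> inverse c *\<^sub>R (c *\<^sub>R v)"
      using assms by (intro scaleR_left_mono) auto
    ultimately show ?thesis using assms by simp
  qed
  then have "c *\<^sub>R (inverse c *\<^sub>R inf (c *\<^sub>R u) (c *\<^sub>R v)) \<le> c *\<^sub>R inf u v"
    using assms by (intro scaleR_left_mono) auto
  then show "inf (c *\<^sub>R u) (c *\<^sub>R v) \<le> c *\<^sub>R inf u v" using assms by simp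
qed

lemma disj_scale:
  fixes u v :: "'a::{ordered_real_vector,lattice}"
  assumes "inf u v = 0" "0 \<le> c"
  shows "inf (c *\<^sub>R u) v = 0"
proof (cases "c \<le> 1")
  case True
  have u: "0 \<le> u" "0 \<le> v" using assms(1) by (metis inf.bounded_iff order_refl)+
  have "c *\<^sub>R u \<le> u" using True u assms(2) by (metis scaleR_left_le_one_le)
  then show ?thesis using disj_mono[OF assms(1)] u assms(2) by (simp add: scaleR_nonneg_nonneg)
next
  case False
  have u: "0 \<le> u" "0 \<le> v" using assms(1) by (metis inf.bounded_iff order_refl)+
  have "1 *\<^sub>R v \<le> c *\<^sub>R v" using False u by (intro scaleR_right_mono) auto
  then have "v \<le> c *\<^sub>R v" by simp
  have "inf (c *\<^sub>R u) v \<le> inf (c *\<^sub>R u) (c *\<^sub>R v)" using \<open>v \<le> c *\<^sub>R v\<close> by (simp add: le_infI2)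
  also have "\<dots> = c *\<^sub>R inf u v" using False by (simp add: scaleR_inf)
  finally have "inf (c *\<^sub>R u) v \<le> 0" using assms by simp
  moreover have "0 \<le> inf (c *\<^sub>R u) v" using u assms by (simp add: scaleR_nonneg_nonneg)
  ultimately show ?thesis by (rule antisym)
qed

context
  assumes FA: "f_algebra_on (UNIV :: 'a::{real_algebra,ordered_real_vector,lattice} set)"
begin

lemma mult_nonneg': "0 \<le> a \<Longrightarrow> 0 \<le> b \<Longrightarrow> 0 \<le> a * (b::'a)"
  using FA by (simp add: f_algebra_on_def)

lemma fdisj: "inf a b = 0 \<Longrightarrow> 0 \<le> c \<Longrightarrow> inf (a * c) b = 0 \<and> inf (c * a) (b::'a) = 0"
  using FA unfolding f_algebra_on_def by blast

lemma disj_nonneg: "inf a b = (0::'a) \<Longrightarrow> 0 \<le> a \<and> 0 \<le> b"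
  by (metis inf.bounded_iff order_refl)

lemma fdisjR1: "inf a b = 0 \<Longrightarrow> 0 \<le> c \<Longrightarrow> inf (a * c) (b::'a) = 0" using fdisj by blast
lemma fdisjL1: "inf a b = 0 \<Longrightarrow> 0 \<le> c \<Longrightarrow> inf (c * a) (b::'a) = 0" using fdisj by blast
lemma fdisjR2: "inf a b = 0 \<Longrightarrow> 0 \<le> c \<Longrightarrow> inf a (b * c) = (0::'a)"
  using fdisj[of b a c] by (simp add: inf_commute)
lemma fdisjL2: "inf a b = 0 \<Longrightarrow> 0 \<le> c \<Longrightarrow> inf a (c * b) = (0::'a)"
  using fdisj[of b a c] by (simp add: inf_commute)

lemma mult_left_mono': "a \<le> b \<Longrightarrow> 0 \<le> c \<Longrightarrow> c * a \<le> c * (b::'a)"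
proof -
  assume "a \<le> b" "0 \<le> c"
  then have "0 \<le> c * (b - a)" by (intro mult_nonneg') auto
  then show ?thesis by (simp add: right_diff_distrib)
qed

lemma mult_right_mono': "a \<le> b \<Longrightarrow> 0 \<le> c \<Longrightarrow> a * c \<le> b * (c::'a)"
proof -
  assume "a \<le> b" "0 \<le> c"
  then have "0 \<le> (b - a) * c" by (intro mult_nonneg') auto
  then show ?thesis by (simp add: left_diff_distrib)
qed

lemma mult_mono'': "a \<le> b \<Longrightarrow> c \<le> d \<Longrightarrow> 0 \<le> a \<Longrightarrow> 0 \<le> d \<Longrightarrow> a * c \<le> b * (d::'a)"
  by (meson mult_left_mono' mult_right_mono' order_trans)

lemma mult_nonpos': "0 \<le> a \<Longrightarrow> b \<le> 0 \<Longrightarrow> a * b \<le> (0::'a)"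
  using mult_left_mono'[of b 0 a] by simp

lemma mult_nonpos2': "a \<le> 0 \<Longrightarrow> 0 \<le> b \<Longrightarrow> a * b \<le> (0::'a)"
  using mult_right_mono'[of a 0 b] by simp

lemma disj_prod: "inf u v = 0 \<Longrightarrow> u * (v::'a) = 0"
proof -
  assume d: "inf u v = 0"
  then have nn: "0 \<le> u" "0 \<le> v" using disj_nonneg by auto
  have "inf (u * v) v = 0" using fdisjR1[OF d nn(2)] .
  then have "inf v (u * v) = 0" by (simp add: inf_commute)
  from fdisjL1[OF this nn(1)] show ?thesis by simp
qed

lemma disj_prod': "inf u v = 0 \<Longrightarrow> v * (u::'a) = 0"
  using disj_prod[of v u] by (simp add: inf_commute)

lemma pp_np_prod: "pp x * np x = (0::'a)" "np x * pp x = (0::'a)"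
  using disj_prod[OF pp_np_disj] disj_prod'[OF pp_np_disj] by auto

lemma pp_mult_left:
  assumes "0 \<le> c"
  shows "pp (c * x) = c * pp x" "np (c * x) = c * np (x::'a)"
proof -
  have d: "inf (c * pp x) (c * np x) = 0"
  proof -
    have "inf (c * pp x) (np x) = 0" using fdisjL1[OF pp_np_disj assms] .
    then have "inf (np x) (c * pp x) = 0" by (simp add: inf_commute)
    from fdisjL1[OF this assms] show ?thesis by (simp add: inf_commute)
  qed
  have e: "c * x = c * pp x - c * np x"
    using arg_cong[where f="(*) c", OF pp_np[of x]] by (simp add: right_diff_distrib)
  have nn: "0 \<le> c * pp x" "0 \<le> c * np x" using assms by (simp_all add: mult_nonneg' pp_nonneg np_nonneg)
  show "pp (c * x) = c * pp x" "np (c * x) = c * np x"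
    using decomp_unique[OF nn d] e by simp_all
qed

lemma pp_mult_right:
  assumes "0 \<le> c"
  shows "pp (x * c) = pp x * c" "np (x * c) = np (x::'a) * c"
proof -
  have d: "inf (pp x * c) (np x * c) = 0"
  proof -
    have "inf (pp x * c) (np x) = 0" using fdisjR1[OF pp_np_disj assms] .
    then have "inf (np x) (pp x * c) = 0" by (simp add: inf_commute)
    from fdisjR1[OF this assms] show ?thesis by (simp add: inf_commute)
  qed
  have e: "x * c = pp x * c - np x * c"
    using arg_cong[where f="\<lambda>z. z * c", OF pp_np[of x]] by (simp add: left_diff_distrib)
  have nn: "0 \<le> pp x * c" "0 \<le> np x * c" using assms by (simp_all add: mult_nonneg' pp_nonneg np_nonneg)
  show "pp (x * c) = pp x * c" "np (x * c) = np x * c"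
    using decomp_unique[OF nn d] e by simp_all
qed

lemma vabs_mult_left: "0 \<le> c \<Longrightarrow> vabs (c * x) = c * vabs (x::'a)"
  by (simp add: vabs_pp_np pp_mult_left distrib_left)

lemma vabs_mult_right: "0 \<le> c \<Longrightarrow> vabs (x * c) = vabs (x::'a) * c"
  by (simp add: vabs_pp_np pp_mult_right distrib_right)

lemma pp_mult_self: "pp x * x = pp x * pp (x::'a)"
proof -
  have "pp x * x = pp x * (pp x - np x)" by (rule arg_cong[where f="(*) (pp x)", OF pp_np])
  then show ?thesis by (simp add: right_diff_distrib pp_np_prod)
qed

lemma np_mult_self: "np x * x = - (np x * np (x::'a))"
proof -
  have "np x * x = np x * (pp x - np x)" by (rule arg_cong[where f="(*) (np x)", OF pp_np])
  then show ?thesis by (simp add: right_diff_distrib pp_np_prod)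
qed

lemma sq_expand: "x * x = pp x * pp x + np x * np (x::'a)"
proof -
  have "x * x = (pp x - np x) * (pp x - np x)" using arg_cong2[where f="(*)", OF pp_np[of x] pp_np[of x]] .
  then show ?thesis by (simp add: algebra_simps pp_np_prod)
qed

lemma sq_nonneg': "0 \<le> x * (x::'a)"
  unfolding sq_expand[of x] by (simp add: add_nonneg_nonneg mult_nonneg' pp_nonneg np_nonneg)

lemma vabs_sq: "vabs x * vabs x = x * (x::'a)"
proof -
  have "vabs x * vabs x = pp x * pp x + np x * np x"
    by (simp add: vabs_pp_np algebra_simps pp_np_prod)
  then show ?thesis using sq_expand[of x] by simp
qed

definition TT :: "'a \<Rightarrow> 'a \<Rightarrow> 'a" where "TT a u = a * u + u * a"

lemma TT_disj:
  assumes "inf u v = 0" "0 \<le> a" "0 \<le> b"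
  shows "inf (TT a u) (TT b (v::'a)) = 0"
proof -
  have nn: "0 \<le> u" "0 \<le> v" using disj_nonneg[OF assms(1)] by auto
  have g: "inf (x * u) (y * v) = 0 \<and> inf (x * u) (v * y) = 0 \<and> inf (u * x) (y * v) = 0 \<and> inf (u * x) (v * y) = 0"
    if "0 \<le> x" "0 \<le> y" for x y
  proof -
    have 1: "inf (x * u) v = 0" using fdisjL1[OF assms(1) that(1)] .
    have 2: "inf (u * x) v = 0" using fdisjR1[OF assms(1) that(1)] .
    show ?thesis using fdisjL2[OF 1 that(2)] fdisjR2[OF 1 that(2)] fdisjL2[OF 2 that(2)] fdisjR2[OF 2 that(2)]
      by blast
  qed
  have p: "0 \<le> a * u" "0 \<le> u * a" "0 \<le> b * v" "0 \<le> v * b"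
    using nn assms by (simp_all add: mult_nonneg')
  have "inf (a * u) (TT b v) = 0" unfolding TT_def
    using g[OF assms(2,3)] p by (intro disj_add) auto
  moreover have "inf (u * a) (TT b v) = 0" unfolding TT_def
    using g[OF assms(2,3)] p by (intro disj_add) auto
  ultimately show ?thesis unfolding TT_def[of a u]
    using p by (intro disj_add_left) (auto simp: TT_def add_nonneg_nonneg)
qed

lemma TT_lin: "TT a (u + v) = TT a u + TT a v" "TT a (c *\<^sub>R u) = c *\<^sub>R TT a (u::'a)"
  "TT a (u - v) = TT a u - TT a v"
  by (simp_all add: TT_def algebra_simps)

lemma TT_mono: "0 \<le> a \<Longrightarrow> u \<le> v \<Longrightarrow> TT a u \<le> TT a (v::'a)"
  unfolding TT_def by (rule add_mono[OF mult_left_mono' mult_right_mono'])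

lemma TT_nonneg: "0 \<le> a \<Longrightarrow> 0 \<le> u \<Longrightarrow> 0 \<le> TT a (u::'a)"
  using TT_mono[of a 0 u] by (simp add: TT_def)

lemma TT_inf:
  assumes "0 \<le> a"
  shows "TT a (inf u v) = inf (TT a u) (TT a (v::'a))"
proof -
  define m where "m = inf u v"
  have d: "inf (TT a (u - m)) (TT a (v - m)) = 0"
    using TT_disj[OF inf_sub_inf assms assms] by (simp add: m_def)
  have "inf (TT a u) (TT a v) = inf (TT a m + TT a (u - m)) (TT a m + TT a (v - m))"
    by (simp add: TT_lin)
  also have "\<dots> = TT a m + inf (TT a (u - m)) (TT a (v - m))"
    by (simp add: LG.add_inf_distrib_left)
  finally show ?thesis using d by (simp add: m_def)
qed

lemma vabs_comm_le:
  assumes "0 \<le> a"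
  shows "vabs (a * z - z * a) \<le> TT a (vabs (z::'a))"
proof -
  have "vabs (a * z - z * a) \<le> vabs (a * z) + vabs (- (z * a))"
    using vabs_triangle[of "a * z" "- (z * a)"] by simp
  also have "\<dots> = TT a (vabs z)" using assms
    by (simp add: vabs_neg vabs_mult_left vabs_mult_right TT_def)
  finally show ?thesis .
qed

end

context
  assumes FA: "f_algebra_on (UNIV :: 'a::{real_algebra,ordered_real_vector,lattice} set)"
    and SP: "semiprime_on (UNIV :: 'a set)"
begin

lemma sq_zero: "x * x = 0 \<Longrightarrow> x = (0::'a)"
proof -
  assume "x * x = 0"
  then have "nilpotent x" unfolding nilpotent_def by (intro exI[of _ 1]) simp
  then show ?thesis using SP by (simp add: semiprime_on_def)
qed

lemma cube_zero: "x * (x * x) = 0 \<Longrightarrow> x = (0::'a)"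
proof -
  assume "x * (x * x) = 0"
  then have "nilpotent x" unfolding nilpotent_def by (intro exI[of _ 2]) (simp add: numeral_2_eq_2)
  then show ?thesis using SP by (simp add: semiprime_on_def)
qed

lemma prod_zero_disj: "0 \<le> u \<Longrightarrow> 0 \<le> v \<Longrightarrow> u * v = 0 \<Longrightarrow> inf u v = (0::'a)"
proof -
  assume a: "0 \<le> u" "0 \<le> v" "u * v = 0"
  define m where "m = inf u v"
  have m0: "0 \<le> m" using a by (simp add: m_def)
  have mu: "m \<le> u" and mv: "m \<le> v" by (simp_all add: m_def)
  have "m * m \<le> u * m" using mult_right_mono'[OF FA mu m0] .
  also have "\<dots> \<le> u * v" using mult_left_mono'[OF FA mv a(1)] .
  finally have "m * m \<le> 0" using a(3) by simp
  then have "m * m = 0" using sq_nonneg'[OF FA, of m] by (rule antisym)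
  then have "m = 0" by (rule sq_zero)
  then show ?thesis by (simp add: m_def)
qed

lemma sq_le_zero: "x * x \<le> 0 \<Longrightarrow> x = (0::'a)"
  using sq_nonneg'[OF FA, of x] sq_zero antisym by blast

end

lemma grid_step:
  fixes x e :: "'a::{ordered_ab_group_add,lattice}"
  assumes "0 \<le> e"
  shows "inf (e + pp x) (vabs (x - e)) \<le> e + pp (x - e)"
proof -
  define u where "u = e + pp x"
  have u0: "0 \<le> u" using assms by (simp add: u_def add_nonneg_nonneg pp_nonneg)
  have "inf u (vabs (x - e)) = inf u (pp (x - e) + np (x - e))" by (simp add: vabs_pp_np)
  also have "\<dots> \<le> inf u (pp (x - e)) + inf u (np (x - e))"
    by (rule inf_add_le[OF u0 pp_nonneg np_nonneg])
  also have "inf u (np (x - e)) \<le> e"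
  proof -
    have "np (x - e) \<le> e + np x"
    proof -
      have "e + - x \<le> e + np x" by (rule add_left_mono[OF np_ge])
      then have "- (x - e) \<le> e + np x" by (simp add: algebra_simps)
      moreover have "0 \<le> e + np x" using assms np_nonneg[of x] by simp
      ultimately show ?thesis by (simp add: np_def)
    qed
    then have "inf u (np (x - e)) \<le> inf (e + pp x) (e + np x)" by (simp add: u_def le_infI2)
    also have "\<dots> = e + inf (pp x) (np x)" by (simp add: LG.add_inf_distrib_left)
    also have "\<dots> = e" by (simp add: pp_np_disj)
    finally show ?thesis .
  qed
  then have "inf u (pp (x - e)) + inf u (np (x - e)) \<le> pp (x - e) + e"
    by (intro add_mono) auto
  finally show ?thesis by (simp add: u_def add.commute)
qed

fun gridM :: "'a::{real_vector,ordered_ab_group_add,lattice} \<Rightarrow> 'a \<Rightarrow> real \<Rightarrow> nat \<Rightarrow> 'a" where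
  "gridM a b e 0 = vabs b"
| "gridM a b e (Suc k) = inf (gridM a b e k) (vabs (b - (real (Suc k) * e) *\<^sub>R a))"

lemma grid_bound:
  fixes a b :: "'a::{ordered_real_vector,lattice}"
  assumes "0 \<le> a" "0 \<le> b" "0 \<le> e"
  shows "gridM a b e k \<le> e *\<^sub>R a + pp (b - (real k * e) *\<^sub>R a)"
proof (induction k)
  case 0
  have "0 \<le> e *\<^sub>R a" using assms by (simp add: scaleR_nonneg_nonneg)
  then show ?case using assms by (simp add: vabs_of_nonneg pp_of_nonneg)
next
  case (Suc k)
  define x where "x = b - (real k * e) *\<^sub>R a"
  have ea: "0 \<le> e *\<^sub>R a" using assms by (simp add: scaleR_nonneg_nonneg)
  have xe: "b - (real (Suc k) * e) *\<^sub>R a = x - e *\<^sub>R a"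
    by (simp add: x_def algebra_simps scaleR_add_left)
  have "gridM a b e (Suc k) = inf (gridM a b e k) (vabs (x - e *\<^sub>R a))"
    by (simp only: gridM.simps xe)
  also have "\<dots> \<le> inf (e *\<^sub>R a + pp x) (vabs (x - e *\<^sub>R a))"
    using Suc.IH unfolding x_def by (rule inf_mono) simp
  also have "\<dots> \<le> e *\<^sub>R a + pp (x - e *\<^sub>R a)" by (rule grid_step[OF ea])
  finally have "gridM a b e (Suc k) \<le> e *\<^sub>R a + pp (x - e *\<^sub>R a)" .
  then show ?case by (simp only: xe)
qed

context
  assumes FA: "f_algebra_on (UNIV :: 'a::{real_algebra,ordered_real_vector,lattice} set)"
begin

lemma comm_grid:
  assumes "0 \<le> a"
  shows "vabs (a * b - b * a) \<le> TT a (gridM a b e k :: 'a)"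
proof (induction k)
  case 0
  show ?case using vabs_comm_le[OF FA assms, of b] by simp
next
  case (Suc k)
  define t where "t = real (Suc k) * e"
  have "a * (b - t *\<^sub>R a) - (b - t *\<^sub>R a) * a = a * b - b * a"
    by (simp add: algebra_simps)
  then have 1: "vabs (a * b - b * a) \<le> TT a (vabs (b - t *\<^sub>R a))"
    using vabs_comm_le[OF FA assms, of "b - t *\<^sub>R a"] by simp
  have "TT a (gridM a b e (Suc k)) = inf (TT a (gridM a b e k)) (TT a (vabs (b - t *\<^sub>R a)))"
    by (simp add: t_def TT_inf[OF FA assms])
  then show ?case using Suc.IH 1 by simp
qed

lemma comm_bound:
  assumes "0 \<le> a" "0 \<le> b" "0 < n"
  shows "vabs (a * b - b * a) \<le> (2 / real n) *\<^sub>R (a * a) + TT a (pp (b - a) :: 'a)"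
proof -
  define e where "e = 1 / real n"
  have e0: "0 \<le> e" by (simp add: e_def)
  have ne: "real n * e = 1" using assms by (simp add: e_def)
  have "vabs (a * b - b * a) \<le> TT a (gridM a b e n)" by (rule comm_grid[OF assms(1)])
  also have "\<dots> \<le> TT a (e *\<^sub>R a + pp (b - a))"
    using grid_bound[OF assms(1,2) e0, of n] ne by (intro TT_mono[OF FA assms(1)]) simp
  also have "\<dots> = (2 / real n) *\<^sub>R (a * a) + TT a (pp (b - a))"
  proof -
    have "TT a a = 2 *\<^sub>R (a * a)" by (simp add: TT_def[OF FA] scaleR_2)
    then show ?thesis by (simp add: TT_lin[OF FA] e_def)
  qed
  finally show ?thesis .
qed

end

context
  assumes FA: "f_algebra_on (UNIV :: 'a::{real_algebra,ordered_real_vector,lattice} set)"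
    and AR: "archimedean_on (UNIV :: 'a set)"
begin

lemma comm_nonneg:
  assumes a: "0 \<le> a" and b: "0 \<le> (b::'a)"
  shows "a * b = b * a"
proof -
  define c where "c = a * b - b * a"
  define P where "P = TT a (pp (b - a))"
  define Q where "Q = TT b (pp (a - b))"
  define Z where "Z = 2 *\<^sub>R (a * a) + 2 *\<^sub>R (b * b)"
  have PQ: "inf P Q = 0"
  proof -
    have "inf (pp (b - a)) (pp (a - b)) = 0"
      using pp_np_disj[of "b - a"] by (simp add: np_is_pp_neg)
    then show ?thesis unfolding P_def Q_def by (rule TT_disj[OF FA _ a b])
  qed
  have P0: "0 \<le> P" "0 \<le> Q" unfolding P_def Q_def using a b
    by (simp_all add: TT_nonneg[OF FA] pp_nonneg)
  have aa: "0 \<le> a * a" "0 \<le> b * b" using sq_nonneg'[OF FA] by auto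
  have bound: "real n *\<^sub>R vabs c \<le> Z" for n :: nat
  proof (cases "n = 0")
    case True
    have Z0: "0 \<le> Z" unfolding Z_def using aa by (intro add_nonneg_nonneg scaleR_nonneg_nonneg) auto
    then show ?thesis using True by simp
  next
    case False
    then have n0: "0 < n" by simp
    define X where "X = (2 / real n) *\<^sub>R (a * a)"
    define Y where "Y = (2 / real n) *\<^sub>R (b * b)"
    have X0: "0 \<le> X" "0 \<le> Y" using aa by (simp_all add: X_def Y_def scaleR_nonneg_nonneg)
    have 1: "vabs c \<le> X + P" unfolding c_def X_def P_def by (rule comm_bound[OF FA a b n0])
    have "b * a - a * b = - c" by (simp add: c_def)
    then have "vabs c = vabs (b * a - a * b)" by (simp add: vabs_neg)
    also have "\<dots> \<le> Y + Q" unfolding Y_def Q_def by (rule comm_bound[OF FA b a n0])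
    finally have 2: "vabs c \<le> Y + Q" .
    have "vabs c \<le> inf (X + Y + P) (X + Y + Q)"
    proof (rule le_infI)
      have "X \<le> X + Y" using X0 by simp
      then have "X + P \<le> X + Y + P" by (rule add_right_mono)
      then show "vabs c \<le> X + Y + P" using 1 by (rule order_trans[rotated])
      have "Y \<le> X + Y" using X0 by simp
      then have "Y + Q \<le> X + Y + Q" by (rule add_right_mono)
      then show "vabs c \<le> X + Y + Q" using 2 by (rule order_trans[rotated])
    qed
    also have "\<dots> = X + Y + inf P Q" by (simp add: LG.add_inf_distrib_left add.assoc)
    also have "\<dots> = (1 / real n) *\<^sub>R Z" by (simp add: PQ X_def Y_def Z_def scaleR_add_right)
    finally have "vabs c \<le> (1 / real n) *\<^sub>R Z" .
    then have "real n *\<^sub>R vabs c \<le> real n *\<^sub>R ((1 / real n) *\<^sub>R Z)"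
      by (intro scaleR_left_mono) auto
    then show ?thesis using n0 by simp
  qed
  have "vabs c = 0" using AR bound vabs_nonneg[of c] unfolding archimedean_on_def by blast
  then show ?thesis by (simp add: c_def vabs_zero_iff)
qed

lemma fcomm: "a * b = b * (a::'a)"
proof -
  have "a * b = (pp a - np a) * (pp b - np b)"
    using arg_cong2[where f="(*)", OF pp_np[of a] pp_np[of b]] .
  also have "\<dots> = pp a * pp b - pp a * np b - np a * pp b + np a * np b"
    by (simp add: algebra_simps)
  also have "\<dots> = pp b * pp a - np b * pp a - pp b * np a + np b * np a"
    using comm_nonneg pp_nonneg np_nonneg by metis
  also have "\<dots> = (pp b - np b) * (pp a - np a)" by (simp add: algebra_simps)
  also have "\<dots> = b * a" using arg_cong2[where f="(*)", OF pp_np[of b] pp_np[of a]] by simp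
  finally show ?thesis .
qed

lemma fleft_comm: "a * (b * c) = b * (a * (c::'a))"
  by (metis fcomm mult.assoc)

end

context
  assumes FA: "f_algebra_on (UNIV :: 'a::{real_algebra,ordered_real_vector,lattice} set)"
    and AR: "archimedean_on (UNIV :: 'a set)"
    and SP: "semiprime_on (UNIV :: 'a set)"
begin

lemma cm: "a * b = b * (a::'a)" using fcomm[OF FA AR] .
lemma cml: "a * (b * c) = b * (a * (c::'a))" using fleft_comm[OF FA AR] .

lemmas mlm = mult_left_mono'[OF FA]
lemmas mrm = mult_right_mono'[OF FA]
lemmas mnn = mult_nonneg'[OF FA]

lemma kill_pp:
  assumes "0 \<le> d" "d * x \<le> 0" "pp x \<le> y" "0 \<le> v" "y \<le> c *\<^sub>R (v * d)" "0 \<le> c"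
  shows "x \<le> (0::'a)"
proof -
  have "d * pp x = pp (d * x)" using pp_mult_left[OF FA assms(1)] by simp
  also have "\<dots> = 0" using assms(2) by (simp add: pp_of_nonpos)
  finally have "inf d (pp x) = 0" by (intro prod_zero_disj[OF FA SP] assms(1) pp_nonneg)
  then have "inf (v * d) (pp x) = 0" using fdisjL1[OF FA _ assms(4)] by blast
  then have "inf (c *\<^sub>R (v * d)) (pp x) = 0" using disj_scale assms(6) by blast
  moreover have "pp x \<le> c *\<^sub>R (v * d)" using assms(3,5) by simp
  ultimately have "pp x \<le> 0" by (metis inf.absorb_iff2 inf_commute order_refl)
  then have "pp x = 0" using pp_nonneg[of x] by simp
  then show ?thesis by (simp add: pp_zero_iff)
qed

lemma VP:
  assumes d: "0 \<le> d" and v: "0 \<le> v" and n: "0 \<le> n"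
  shows "v * pp (n *\<^sub>R d - v * d) \<le> n *\<^sub>R pp (n *\<^sub>R d - v * (d::'a))"
    and "pp (n *\<^sub>R d - v * d) \<le> n *\<^sub>R d"
proof -
  define p where "p = pp (n *\<^sub>R d - v * d)"
  have p0: "0 \<le> p" by (simp add: p_def pp_nonneg)
  have vd: "0 \<le> v * d" using mnn[OF v d] .
  show pnd: "pp (n *\<^sub>R d - v * d) \<le> n *\<^sub>R d"
    using vd n d by (intro pp_le) (auto simp: scaleR_nonneg_nonneg)
  have e1: "d * (v * p - n *\<^sub>R p) = - (p * (n *\<^sub>R d - v * d))"
    by (simp add: algebra_simps cm cml)
  have e2: "p * (n *\<^sub>R d - v * d) = p * p" unfolding p_def by (rule pp_mult_self[OF FA])
  have "d * (v * p - n *\<^sub>R p) \<le> 0" using e1 e2 sq_nonneg'[OF FA, of p] by simp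
  moreover have "pp (v * p - n *\<^sub>R p) \<le> v * p"
    using mnn[OF v p0] n p0 by (intro pp_le) (auto simp: scaleR_nonneg_nonneg)
  moreover have "v * p \<le> n *\<^sub>R (v * d)"
    using mlm[OF pnd[folded p_def] v] by simp
  ultimately have "v * p - n *\<^sub>R p \<le> 0"
    using kill_pp[OF d _ _ v _ n] by blast
  then show "v * pp (n *\<^sub>R d - v * d) \<le> n *\<^sub>R pp (n *\<^sub>R d - v * d)" by (simp add: p_def)
qed

lemma BT:
  assumes e: "0 \<le> e" "e \<le> p" and v: "0 \<le> v" and n: "0 \<le> n" and vp: "v * p \<le> n *\<^sub>R (p::'a)"
  shows "v * e \<le> n *\<^sub>R e"
proof -
  have p0: "0 \<le> p" using e by simp
  have "p * (v * e - n *\<^sub>R e) = e * (v * p - n *\<^sub>R p)" by (simp add: algebra_simps cm cml)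
  also have "\<dots> \<le> 0" using mult_nonpos'[OF FA e(1)] vp by simp
  finally have 1: "p * (v * e - n *\<^sub>R e) \<le> 0" .
  have 2: "pp (v * e - n *\<^sub>R e) \<le> v * e"
    using mnn[OF v e(1)] n e by (intro pp_le) (auto simp: scaleR_nonneg_nonneg)
  have "v * e \<le> v * p" using mlm[OF e(2) v] .
  then have 3: "v * e \<le> 1 *\<^sub>R (v * p)" by simp
  have "v * e - n *\<^sub>R e \<le> 0"
    using kill_pp[OF p0 1 2 v 3] by simp
  then show ?thesis by simp
qed

lemma KEY:
  assumes d: "0 \<le> d" and v: "0 \<le> v" and r: "0 \<le> r" and drv: "d \<le> r + v * r" and n: "0 \<le> n"
  shows "pp (n *\<^sub>R d - v * d) \<le> (n * (n + 1)) *\<^sub>R (r::'a)"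
proof -
  define p where "p = pp (n *\<^sub>R d - v * d)"
  define C where "C = n * (n + 1)"
  define e where "e = pp (p - C *\<^sub>R r)"
  have C0: "0 \<le> C" using n by (simp add: C_def)
  have p0: "0 \<le> p" by (simp add: p_def pp_nonneg)
  have e0: "0 \<le> e" by (simp add: e_def pp_nonneg)
  have vp: "v * p \<le> n *\<^sub>R p" and pnd: "p \<le> n *\<^sub>R d" using VP[OF d v n] by (simp_all add: p_def)
  have ep: "e \<le> p" unfolding e_def using C0 r p0 by (intro pp_le) (auto simp: scaleR_nonneg_nonneg)
  have ve: "v * e \<le> n *\<^sub>R e" by (rule BT[OF e0 ep v n vp])
  have "e * d \<le> e * (r + v * r)" by (rule mlm[OF drv e0])
  also have "e * (r + v * r) = e * r + (v * e) * r" by (simp add: algebra_simps cm cml)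
  also have "(v * e) * r \<le> (n *\<^sub>R e) * r" by (rule mrm[OF ve r])
  finally have ed: "e * d \<le> (1 + n) *\<^sub>R (e * r)" by (simp add: algebra_simps)
  have "e * p \<le> e * (n *\<^sub>R d)" by (rule mlm[OF pnd e0])
  also have "\<dots> = n *\<^sub>R (e * d)" by simp
  also have "\<dots> \<le> n *\<^sub>R ((1 + n) *\<^sub>R (e * r))" using ed n by (rule scaleR_left_mono)
  finally have ep2: "e * p \<le> C *\<^sub>R (e * r)" by (simp add: C_def algebra_simps)
  have "e * e = e * (p - C *\<^sub>R r)" unfolding e_def by (rule pp_mult_self[OF FA, symmetric])
  also have "\<dots> = e * p - C *\<^sub>R (e * r)" by (simp add: algebra_simps)
  finally have "e * e \<le> 0" using ep2 by simp
  then have "e = 0" by (rule sq_le_zero[OF FA SP])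
  then have "p - C *\<^sub>R r \<le> 0" by (simp add: e_def pp_zero_iff)
  then show ?thesis by (simp add: p_def C_def)
qed

lemma arch:
  assumes "0 \<le> x" "\<And>n::nat. real n *\<^sub>R x \<le> y"
  shows "x = (0::'a)"
  using AR assms unfolding archimedean_on_def by blast

context
  assumes DC: "dedekind_complete_on (UNIV :: 'a set)"
begin

lemma division:
  assumes v: "0 \<le> v" and y: "0 \<le> (y::'a)"
  shows "\<exists>q. 0 \<le> q \<and> q + v * q = y"
proof -
  define S where "S = {z. 0 \<le> z \<and> z + v * z \<le> y}"
  have zS: "0 \<in> S" using y by (simp add: S_def)
  have zy: "z \<le> y" if "z \<in> S" for z
  proof -
    have "0 \<le> v * z" using that mnn[OF v] by (simp add: S_def)
    then have "z \<le> z + v * z" by simp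
    moreover have "z + v * z \<le> y" using that by (simp add: S_def)
    ultimately show ?thesis by (rule order_trans)
  qed
  obtain q where qub: "\<And>z. z \<in> S \<Longrightarrow> z \<le> q" and qle: "\<And>u. (\<forall>z\<in>S. z \<le> u) \<Longrightarrow> q \<le> u"
    using DC zS zy unfolding dedekind_complete_on_def
    by (metis UNIV_I empty_iff subset_UNIV)
  have q0: "0 \<le> q" using qub[OF zS] .
  define d where "d = pp (q + v * q - y)"
  have d0: "0 \<le> d" by (simp add: d_def pp_nonneg)
  have dbound: "d \<le> (q - z) + v * (q - z)" if "z \<in> S" for z
  proof -
    have zq: "0 \<le> q - z" using qub[OF that] by simp
    have 1: "0 \<le> (q - z) + v * (q - z)" using zq mnn[OF v zq] by simp
    have "q + v * q - y \<le> q + v * q - (z + v * z)" using that unfolding S_def by (intro diff_left_mono) auto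
    also have "\<dots> = (q - z) + v * (q - z)" by (simp add: algebra_simps)
    finally show ?thesis unfolding d_def using 1 by (rule pp_le)
  qed
  have "real n *\<^sub>R d \<le> v * d" for n :: nat
  proof (cases "n = 0")
    case True
    then show ?thesis using mnn[OF v d0] by simp
  next
    case False
    define C where "C = real n * (real n + 1)"
    define p where "p = pp (real n *\<^sub>R d - v * d)"
    have C0: "0 < C" using False by (simp add: C_def)
    have "p \<le> C *\<^sub>R (q - z)" if "z \<in> S" for z
      unfolding p_def C_def
      using KEY[OF d0 v _ dbound[OF that], of "real n"] qub[OF that] by simp
    then have "z \<le> q - inverse C *\<^sub>R p" if "z \<in> S" for z
    proof -
      have "inverse C *\<^sub>R p \<le> inverse C *\<^sub>R (C *\<^sub>R (q - z))"
        using \<open>z \<in> S\<close> \<open>\<And>z. z \<in> S \<Longrightarrow> p \<le> C *\<^sub>R (q - z)\<close> C0 by (intro scaleR_left_mono) auto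
      then show ?thesis using C0 by (simp add: algebra_simps)
    qed
    then have "q \<le> q - inverse C *\<^sub>R p" using qle by blast
    then have "inverse C *\<^sub>R p \<le> 0" by simp
    then have "C *\<^sub>R (inverse C *\<^sub>R p) \<le> C *\<^sub>R 0" using C0 by (intro scaleR_left_mono) auto
    then have "p \<le> 0" using C0 by simp
    then have "real n *\<^sub>R d - v * d \<le> 0" using pp_nonneg[of "real n *\<^sub>R d - v * d"]
      by (simp add: p_def pp_zero_iff)
    then show ?thesis by simp
  qed
  then have "d = 0" using arch[OF d0] by blast
  then have up: "q + v * q \<le> y" by (simp add: d_def pp_zero_iff)
  define g where "g = y - (q + v * q)"
  have g0: "0 \<le> g" using up by (simp add: g_def)
  have "real n *\<^sub>R g \<le> v * g" for n :: nat
  proof (cases "n = 0")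
    case True
    then show ?thesis using mnn[OF v g0] by simp
  next
    case False
    define C where "C = real n * (real n + 1)"
    define h where "h = pp (real n *\<^sub>R g - v * g)"
    have C0: "0 < C" using False by (simp add: C_def)
    have vh: "v * h \<le> real n *\<^sub>R h" and hg: "h \<le> real n *\<^sub>R g"
      using VP[OF g0 v, of "real n"] by (simp_all add: h_def)
    have h0: "0 \<le> h" by (simp add: h_def pp_nonneg)
    define \<delta> where "\<delta> = inverse C *\<^sub>R h"
    have \<delta>0: "0 \<le> \<delta>" using C0 h0 by (simp add: \<delta>_def scaleR_nonneg_nonneg)
    have "h + v * h \<le> (1 + real n) *\<^sub>R h" using vh by (simp add: algebra_simps)
    also have "\<dots> \<le> (1 + real n) *\<^sub>R (real n *\<^sub>R g)" using hg by (intro scaleR_left_mono) auto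
    also have "\<dots> = C *\<^sub>R g" by (simp add: C_def algebra_simps)
    finally have "inverse C *\<^sub>R (h + v * h) \<le> inverse C *\<^sub>R (C *\<^sub>R g)"
      using C0 by (intro scaleR_left_mono) auto
    then have "\<delta> + v * \<delta> \<le> g" using C0 by (simp add: \<delta>_def scaleR_add_right)
    then have "(q + \<delta>) + v * (q + \<delta>) \<le> y" by (simp add: g_def algebra_simps)
    moreover have "0 \<le> q + \<delta>" using q0 \<delta>0 by simp
    ultimately have "q + \<delta> \<in> S" by (simp add: S_def)
    then have "q + \<delta> \<le> q" by (rule qub)
    then have "\<delta> \<le> 0" by simp
    then have "C *\<^sub>R \<delta> \<le> C *\<^sub>R 0" using C0 by (intro scaleR_left_mono) auto
    then have "h \<le> 0" using C0 by (simp add: \<delta>_def)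
    then have "real n *\<^sub>R g - v * g \<le> 0" unfolding h_def by (rule order_trans[OF pp_ge])
    then show ?thesis by simp
  qed
  then have "g = 0" using arch[OF g0] by blast
  then show ?thesis using q0 by (intro exI[of _ q]) (simp add: g_def)
qed

end

lemma bounded_q:
  assumes w: "0 \<le> w" and q: "0 \<le> q" and h: "q + (w * w) * q \<le> (w::'a)"
  shows "q * q \<le> q"
proof -
  have wwq: "0 \<le> (w * w) * q" using mnn[OF mnn[OF w w] q] .
  have wq: "0 \<le> w * q" using mnn[OF w q] .
  have qw: "q \<le> w" using h wwq by (meson add_increasing2 order_trans order_refl)
  define D where "D = q + (w * w) * q - 2 *\<^sub>R (w * q)"
  define c where "c = np D"
  have c0: "0 \<le> c" by (simp add: c_def np_nonneg)
  have cD: "c * D = - (c * c)" unfolding c_def by (rule np_mult_self[OF FA])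
  have Dq: "D * q = (q - w * q) * (q - w * q)"
    by (simp add: D_def algebra_simps cm cml scaleR_2)
  have "0 \<le> c * (D * q)" using mnn[OF c0] Dq sq_nonneg'[OF FA] by simp
  also have "c * (D * q) = - ((c * c) * q)" by (simp add: mult.assoc[symmetric] cD)
  finally have ccq: "(c * c) * q = 0" using mnn[OF mnn[OF c0 c0] q] by simp
  have c2: "c \<le> 2 *\<^sub>R (w * q)"
    unfolding c_def np_def D_def using wq q wwq
    by (intro sup_least) (auto simp: algebra_simps scaleR_nonneg_nonneg add_nonneg_nonneg)
  have "c * (c * c) = (c * c) * c" by (simp add: mult.assoc)
  also have "\<dots> \<le> (c * c) * (2 *\<^sub>R (w * q))" by (rule mlm[OF c2 mnn[OF c0 c0]])
  also have "\<dots> = 2 *\<^sub>R (w * ((c * c) * q))" by (simp add: cm cml mult.assoc)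
  also have "\<dots> = 0" by (simp add: ccq)
  finally have "c * (c * c) = 0" using mnn[OF c0 mnn[OF c0 c0]] by simp
  then have "c = 0" by (rule cube_zero[OF FA SP])
  then have "0 \<le> D" by (simp add: c_def np_zero_iff)
  then have b: "2 *\<^sub>R (w * q) \<le> w" using h by (simp add: D_def)
  define e where "e = pp (q * q - q)"
  have e0: "0 \<le> e" by (simp add: e_def pp_nonneg)
  have eqq: "e * (q * q) = e * q + e * e"
  proof -
    have "e * (q * q - q) = e * e" unfolding e_def by (rule pp_mult_self[OF FA])
    then show ?thesis by (simp add: algebra_simps)
  qed
  have eq0: "0 \<le> e * q" using mnn[OF e0 q] .
  have "(e * q) * (2 *\<^sub>R (w * q)) \<le> (e * q) * w" by (rule mlm[OF b eq0])
  moreover have "(e * q) * (2 *\<^sub>R (w * q)) = 2 *\<^sub>R (w * (e * (q * q)))" by (simp add: cm cml mult.assoc)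
  moreover have "(e * q) * w = w * (e * q)" by (simp add: cm)
  ultimately have "2 *\<^sub>R (w * (e * q) + w * (e * e)) \<le> w * (e * q)" by (simp add: eqq distrib_left)
  then have "w * (e * q) + 2 *\<^sub>R (w * (e * e)) \<le> 0" by (simp add: scaleR_2 algebra_simps)
  moreover have "0 \<le> w * (e * q)" using mnn[OF w eq0] .
  moreover have wee: "0 \<le> w * (e * e)" using mnn[OF w mnn[OF e0 e0]] .
  ultimately have "w * (e * e) = 0"
    by (metis add_le_same_cancel1 antisym le_add_same_cancel1 order_trans scaleR_2 add_nonneg_nonneg)
  have eq: "e \<le> w * q"
  proof -
    have "e \<le> q * q" unfolding e_def using q mnn[OF q q] by (intro pp_le) auto
    also have "\<dots> \<le> w * q" by (rule mrm[OF qw q])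
    finally show ?thesis .
  qed
  have "e * (e * e) = (e * e) * e" by (simp add: mult.assoc)
  also have "\<dots> \<le> (e * e) * (w * q)" by (rule mlm[OF eq mnn[OF e0 e0]])
  also have "\<dots> = q * (w * (e * e))" by (simp add: cm cml mult.assoc)
  also have "\<dots> = 0" using \<open>w * (e * e) = 0\<close> by simp
  finally have "e * (e * e) = 0" using mnn[OF e0 mnn[OF e0 e0]] by simp
  then have "e = 0" by (rule cube_zero[OF FA SP])
  then show ?thesis by (simp add: e_def pp_zero_iff)
qed

end

theorem corollary10:
  fixes B :: "'a::{real_algebra, ordered_real_vector, lattice} set"
  assumes "f_algebra_on (UNIV :: 'a set)"
    and "archimedean_on (UNIV :: 'a set)"
    and "semiprime_on (UNIV :: 'a set)"
    and "dedekind_complete_on (UNIV :: 'a set)"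
    and "intermediate_algebra B"
  shows "order_ideal B \<and> f_algebra_on B \<and> semiprime_on B \<and> dedekind_complete_on B"
proof -
  note FA = assms(1) and AR = assms(2) and SP = assms(3) and DC = assms(4)
  have sub: "subalgebra B" and Ab: "bounded_elements \<subseteq> B"
    using assms(5) by (auto simp: intermediate_algebra_def)
  have B0: "0 \<in> B" and Badd: "\<And>x y. x \<in> B \<Longrightarrow> y \<in> B \<Longrightarrow> x + y \<in> B"
    and Bsc: "\<And>c x. x \<in> B \<Longrightarrow> c *\<^sub>R x \<in> B" and Bmul: "\<And>x y. x \<in> B \<Longrightarrow> y \<in> B \<Longrightarrow> x * y \<in> B"
    using sub unfolding subalgebra_def by auto
  have Bdiff: "x - y \<in> B" if "x \<in> B" "y \<in> B" for x y
  proof -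
    have "x + (-1) *\<^sub>R y \<in> B" using that by (intro Badd Bsc)
    then show ?thesis by simp
  qed
  have pos: "y \<in> B" if x: "x \<in> B" and y: "0 \<le> y" "y \<le> vabs x" for x y
  proof -
    define w where "w = vabs x"
    define v where "v = x * x"
    have w0: "0 \<le> w" by (simp add: w_def vabs_nonneg)
    have v0: "0 \<le> v" unfolding v_def by (rule sq_nonneg'[OF FA])
    have vw: "v = w * w" unfolding v_def w_def by (rule vabs_sq[OF FA, symmetric])
    have vB: "v \<in> B" unfolding v_def by (rule Bmul[OF x x])
    obtain q where q0: "0 \<le> q" and qy: "q + v * q = y" using division[OF FA AR SP DC v0 y(1)] by blast
    have "q + (w * w) * q \<le> w" using qy y(2) vw by (simp add: w_def)
    then have "q * q \<le> q" by (rule bounded_q[OF FA AR SP w0 q0])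
    then have "q \<in> bounded_elements" unfolding bounded_elements_def using q0
      by (intro CollectI exI[of _ 1]) (simp add: vabs_of_nonneg)
    then have qB: "q \<in> B" using Ab by blast
    have "q + v * q \<in> B" using qB vB by (intro Badd Bmul)
    then show ?thesis using qy by simp
  qed
  have solid: "y \<in> B" if x: "x \<in> B" and le: "vabs y \<le> vabs x" for x y
  proof -
    have "pp y \<in> B" using pos[OF x pp_nonneg] order_trans[OF pp_le_vabs le] by blast
    moreover have "np y \<in> B" using pos[OF x np_nonneg] order_trans[OF np_le_vabs le] by blast
    ultimately have "pp y - np y \<in> B" by (rule Bdiff)
    then show ?thesis by (simp only: pp_np[of y, symmetric])
  qed
  have absB: "vabs a \<in> B" if "a \<in> B" for a
    using solid[OF that] by (simp add: vabs_vabs)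
  have sumabsB: "vabs a + vabs b \<in> B" if "a \<in> B" "b \<in> B" for a b
    using that by (intro Badd absB)
  have vabs_sum: "vabs (vabs a + vabs b) = vabs a + vabs (b::'a)" for a b
    by (intro vabs_of_nonneg add_nonneg_nonneg vabs_nonneg)
  have OI: "order_ideal B"
    unfolding order_ideal_def
  proof (intro conjI ballI allI impI)
    show "0 \<in> B" by (rule B0)
    show "x + y \<in> B" if "x \<in> B" "y \<in> B" for x y using that by (rule Badd)
    show "c *\<^sub>R x \<in> B" if "x \<in> B" for c x using that by (rule Bsc)
    show "y \<in> B" if "x \<in> B" "vabs y \<le> vabs x" for x y using that by (rule solid)
  qed
  have infB: "inf a b \<in> B" and supB: "sup a b \<in> B" if "a \<in> B" "b \<in> B" for a b
  proof -
    show "inf a b \<in> B" by (rule solid[OF sumabsB[OF that]]) (simp add: vabs_sum vabs_inf)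
    show "sup a b \<in> B" by (rule solid[OF sumabsB[OF that]]) (simp add: vabs_sum vabs_sup)
  qed
  have F1: "\<forall>a\<in>B. \<forall>b\<in>B. inf a b \<in> B \<and> sup a b \<in> B" using infB supB by blast
  have F2: "\<forall>a\<in>B. \<forall>b\<in>B. 0 \<le> a \<longrightarrow> 0 \<le> b \<longrightarrow> 0 \<le> a * b"
    using mult_nonneg'[OF FA] by blast
  have F3: "\<forall>a\<in>B. \<forall>b\<in>B. \<forall>c\<in>B. inf a b = 0 \<and> 0 \<le> c \<longrightarrow> inf (a * c) b = 0 \<and> inf (c * a) b = 0"
    using fdisj[OF FA] by blast
  have FB: "f_algebra_on B"
    unfolding f_algebra_on_def by (intro conjI sub F1 F2 F3)
  have SB: "semiprime_on B" using SP unfolding semiprime_on_def by simp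
  have DB: "dedekind_complete_on B"
    unfolding dedekind_complete_on_def
  proof (intro allI impI)
    fix X assume XB: "X \<subseteq> B" and h: "X \<noteq> {} \<and> (\<exists>u\<in>B. \<forall>x\<in>X. x \<le> u)"
    then obtain u where uB: "u \<in> B" and ub: "\<forall>x\<in>X. x \<le> u" by blast
    obtain x0 where x0: "x0 \<in> X" using h by blast
    have hh: "X \<noteq> {} \<and> (\<exists>u\<in>UNIV. \<forall>x\<in>X. x \<le> u)" using h ub by blast
    have "\<exists>s\<in>UNIV. (\<forall>x\<in>X. x \<le> s) \<and> (\<forall>u\<in>UNIV. (\<forall>x\<in>X. x \<le> u) \<longrightarrow> s \<le> u)"
      by (rule DC[unfolded dedekind_complete_on_def, rule_format, OF subset_UNIV hh])
    then obtain s where sub_s: "\<forall>x\<in>X. x \<le> s" and least: "\<forall>u'\<in>UNIV. (\<forall>x\<in>X. x \<le> u') \<longrightarrow> s \<le> u'"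
      by blast
    have s_le_u: "s \<le> u" using least ub by blast
    have x0_le_s: "x0 \<le> s" using sub_s x0 by blast
    have "vabs s \<le> vabs x0 + vabs u" by (rule vabs_between[OF x0_le_s s_le_u])
    then have le: "vabs s \<le> vabs (vabs x0 + vabs u)" by (simp only: vabs_sum)
    have x0B: "x0 \<in> B" using x0 XB by blast
    have sB: "s \<in> B" by (rule solid[OF sumabsB[OF x0B uB] le])
    have "(\<forall>x\<in>X. x \<le> s) \<and> (\<forall>u\<in>B. (\<forall>x\<in>X. x \<le> u) \<longrightarrow> s \<le> u)"
      using sub_s least by simp
    then show "\<exists>s\<in>B. (\<forall>x\<in>X. x \<le> s) \<and> (\<forall>u\<in>B. (\<forall>x\<in>X. x \<le> u) \<longrightarrow> s \<le> u)"
      using sB by blast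
  qed
  show ?thesis using OI FB SB DB by (intro conjI)
qed

end
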